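(* Let $(\lambda_j)_{j\ge1}$ be nonnegative with $\sum_j\lambda_j<\infty$ and $\lambda_j\le c\,j^{-\beta}$ for some $\beta>1$. Let $\gamma>0$ with $\beta\neq\gamma+1$, $0<\eta_0\le\bar\eta$ for a fixed constant $\bar\eta$, $\eta_i=\eta_0(1-i/N)^\gamma$ ($i=0,\dots,N-1$), $t_k=\sum_{i<k}\eta_i$, $T=t_N$, and assume $T\ge1$. Then $$\mathcal N_N:=\sum_{i=0}^{N-1}\eta_i^2\sum_{j\ge1}\lambda_j^2e^{-2\lambda_j(t_N-t_{i+1})}\lesssim\eta_0\,T^{-\min\{1-\frac1\beta,\,\frac{\gamma}{\gamma+1}\}},$$ with implicit constant independent of $N$ and $\eta_0$. *)

theory Defs
  imports "HOL-Analysis.Analysis"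
begin

definition step_size :: "real \<Rightarrow> real \<Rightarrow> nat \<Rightarrow> nat \<Rightarrow> real" where
  "step_size eta0 gamma N i = eta0 * (1 - real i / real N) powr gamma"

definition sched_time :: "real \<Rightarrow> real \<Rightarrow> nat \<Rightarrow> nat \<Rightarrow> real" where
  "sched_time eta0 gamma N k = (\<Sum>i<k. step_size eta0 gamma N i)"

text \<open>Noise term N_N; lam is indexed from 1 (lam 0 is ignored).\<close>
definition noise_term :: "(nat \<Rightarrow> real) \<Rightarrow> real \<Rightarrow> real \<Rightarrow> nat \<Rightarrow> real" where
  "noise_term lam eta0 gamma N =
     (\<Sum>i<N. (step_size eta0 gamma N i)\<^sup>2 *
        (\<Sum>j. (lam (Suc j))\<^sup>2 *
           exp (-2 * lam (Suc j) * (sched_time eta0 gamma N N - sched_time eta0 gamma N (Suc i)))))"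

end

theory Submission
  imports Defs
begin

lemma powr_mvt:
  fixes x y e :: real assumes "0 < x" "x < y"
  shows "\<exists>z. x < z \<and> z < y \<and> y powr e - x powr e = (y - x) * (e * z powr (e - 1))"
proof -
  have "\<And>t. x \<le> t \<Longrightarrow> t \<le> y \<Longrightarrow> ((\<lambda>t. t powr e) has_real_derivative e * t powr (e - 1)) (at t)"
    using assms by (intro has_real_derivative_powr) auto
  from MVT2[OF assms(2) this] show ?thesis by auto
qed

lemma mvt_up:
  fixes n e :: real assumes "0 \<le> n" "0 \<le> e"
  shows "(n+1) powr (e+1) - n powr (e+1) \<le> (e+1) * (n+1) powr e"
proof (cases "n = 0")
  case True then show ?thesis using assms by simp
next
  case False
  then obtain z where z: "n < z" "z < n+1" "(n+1) powr (e+1) - n powr (e+1) = (n+1-n) * ((e+1) * z powr (e+1-1))"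
    using powr_mvt[of n "n+1" "e+1"] assms by auto
  have "z powr e \<le> (n+1) powr e" using z assms by (intro powr_mono2) auto
  with z assms show ?thesis by (simp add: mult_left_mono)
qed

lemma sum_pow_lower:
  fixes e :: real assumes "0 \<le> e"
  shows "real n powr (e+1) / (e+1) \<le> (\<Sum>l\<in>{1..n}. real l powr e)"
proof (induction n)
  case 0 then show ?case by simp
next
  case (Suc n)
  have "real (Suc n) powr (e+1) \<le> real n powr (e+1) + (e+1) * real (Suc n) powr e"
    using mvt_up[of "real n" e] assms by (simp add: add.commute)
  then have "real (Suc n) powr (e+1) / (e+1) \<le> (real n powr (e+1) + (e+1) * real (Suc n) powr e) / (e+1)"
    using assms by (intro divide_right_mono) auto
  also have "\<dots> = real n powr (e+1) / (e+1) + real (Suc n) powr e"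
    using assms by (simp add: add_divide_distrib)
  finally have "real (Suc n) powr (e+1) / (e+1) \<le> real n powr (e+1) / (e+1) + real (Suc n) powr e" .
  also have "\<dots> \<le> (\<Sum>l\<in>{1..n}. real l powr e) + real (Suc n) powr e" using Suc by simp
  also have "\<dots> = (\<Sum>l\<in>{1..Suc n}. real l powr e)" by simp
  finally show ?case .
qed

lemma mvt_neg:
  fixes n e :: real assumes "0 \<le> n" "-1 < e" "e < 0"
  shows "(n+1) powr e \<le> ((n+1) powr (e+1) - n powr (e+1)) / (e+1)"
proof (cases "n = 0")
  case True then show ?thesis using assms by (simp add: field_simps)
next
  case False
  then obtain z where z: "n < z" "z < n+1" "(n+1) powr (e+1) - n powr (e+1) = (n+1-n) * ((e+1) * z powr (e+1-1))"
    using powr_mvt[of n "n+1" "e+1"] assms by auto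
  have "(n+1) powr e \<le> z powr e" using z assms by (intro powr_mono2') auto
  then have "(e+1) * (n+1) powr e \<le> (e+1) * z powr e" using assms by (intro mult_left_mono) auto
  also have "\<dots> = (n+1) powr (e+1) - n powr (e+1)" using z by simp
  finally show ?thesis using assms by (simp add: pos_le_divide_eq mult.commute)
qed

lemma sum_pow_upper:
  fixes e :: real assumes "-1 < e"
  shows "(\<Sum>m\<in>{1..N}. real m powr e) \<le> max 1 (1/(e+1)) * real N powr (e+1)"
proof (cases "0 \<le> e")
  case True
  have "(\<Sum>m\<in>{1..N}. real m powr e) \<le> (\<Sum>m\<in>{1..N}. real N powr e)"
    using True by (intro sum_mono powr_mono2) auto
  also have "\<dots> = real N powr (e+1)"
    by (cases "N = 0") (auto simp: powr_add)
  also have "\<dots> \<le> max 1 (1/(e+1)) * real N powr (e+1)"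
    using mult_right_mono[of 1 "max 1 (1/(e+1))" "real N powr (e+1)"] by simp
  finally show ?thesis .
next
  case False
  have "(\<Sum>m\<in>{1..N}. real m powr e) \<le> real N powr (e+1) / (e+1)"
  proof (induction N)
    case 0 then show ?case by simp
  next
    case (Suc n)
    have "(\<Sum>m\<in>{1..Suc n}. real m powr e) = (\<Sum>m\<in>{1..n}. real m powr e) + real (Suc n) powr e" by simp
    also have "\<dots> \<le> real n powr (e+1) / (e+1) + (real (Suc n) powr (e+1) - real n powr (e+1)) / (e+1)"
      using Suc mvt_neg[of "real n" e] assms False by (simp add: add.commute)
    also have "\<dots> = real (Suc n) powr (e+1) / (e+1)" by (simp add: diff_divide_distrib)
    finally show ?case .
  qed
  also have "\<dots> = (1/(e+1)) * real N powr (e+1)" by simp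
  also have "\<dots> \<le> max 1 (1/(e+1)) * real N powr (e+1)"
    by (intro mult_right_mono) auto
  finally show ?thesis .
qed

lemma mvt_tail:
  fixes n s :: real assumes "0 < n" "1 < s"
  shows "(n+1) powr (-s) \<le> (n powr (1-s) - (n+1) powr (1-s)) / (s-1)"
proof -
  obtain z where z: "n < z" "z < n+1" "(n+1) powr (1-s) - n powr (1-s) = (n+1-n) * ((1-s) * z powr (1-s-1))"
    using powr_mvt[of n "n+1" "1-s"] assms by auto
  have "(n+1) powr (-s) \<le> z powr (-s)" using z assms by (intro powr_mono2') auto
  then have "(s-1) * (n+1) powr (-s) \<le> (s-1) * z powr (-s)" using assms by (intro mult_left_mono) auto
  also have "\<dots> = n powr (1-s) - (n+1) powr (1-s)" using z by (simp add: algebra_simps)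
  finally show ?thesis using assms by (simp add: pos_le_divide_eq mult.commute)
qed

lemma tail_sum_aux:
  fixes s :: real assumes "1 < s" "1 \<le> M" "M \<le> N"
  shows "(\<Sum>m\<in>{M..N}. real m powr (-s)) \<le> real M powr (-s) + (real M powr (1-s) - real N powr (1-s)) / (s-1)"
  using assms(3)
proof (induction N rule: dec_induct)
  case base then show ?case by simp
next
  case (step n)
  have "(\<Sum>m\<in>{M..Suc n}. real m powr (-s)) = (\<Sum>m\<in>{M..n}. real m powr (-s)) + real (Suc n) powr (-s)"
    using step by simp
  also have "\<dots> \<le> real M powr (-s) + (real M powr (1-s) - real n powr (1-s)) / (s-1)
      + (real n powr (1-s) - real (Suc n) powr (1-s)) / (s-1)"
    using step.IH mvt_tail[of "real n" s] assms step.hyps by (simp add: add.commute)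
  also have "\<dots> = real M powr (-s) + (real M powr (1-s) - real (Suc n) powr (1-s)) / (s-1)"
    using assms by (simp add: diff_divide_distrib)
  finally show ?case .
qed

lemma tail_sum:
  fixes s :: real assumes "1 < s" "1 \<le> M"
  shows "(\<Sum>m\<in>{M..N}. real m powr (-s)) \<le> s/(s-1) * real M powr (1-s)"
proof (cases "M \<le> N")
  case True
  have "(\<Sum>m\<in>{M..N}. real m powr (-s)) \<le> real M powr (-s) + (real M powr (1-s) - real N powr (1-s)) / (s-1)"
    using tail_sum_aux[OF assms True] .
  also have "\<dots> \<le> real M powr (1-s) + real M powr (1-s) / (s-1)"
    using assms by (intro add_mono powr_mono divide_right_mono) auto
  also have "\<dots> = s/(s-1) * real M powr (1-s)" using assms by (simp add: field_simps)
  finally show ?thesis .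
next
  case False then show ?thesis using assms by simp
qed

lemma lemS:
  fixes B p q :: real assumes B: "0 < B" and p: "0 \<le> p" and q: "p + 1 < q"
  shows "(\<Sum>m\<in>{1..N}. real m powr p * min 1 ((real m / B) powr (-q)))
           \<le> (1 + (q-p)/(q-p-1)) * B powr (p+1)"
proof -
  define s where "s = q - p"
  have s1: "1 < s" using q by (simp add: s_def)
  define A1 where "A1 = {m\<in>{1..N}. real m \<le> B}"
  define A2 where "A2 = {m\<in>{1..N}. B < real m}"
  define g where "g = (\<lambda>m::nat. real m powr p * min 1 ((real m / B) powr (-q)))"
  have g0: "0 \<le> g m" for m unfolding g_def by simp
  have split: "{1..N} = A1 \<union> A2" "A1 \<inter> A2 = {}" by (auto simp: A1_def A2_def)
  have "sum g {1..N} = sum g A1 + sum g A2"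
    unfolding split(1) by (rule sum.union_disjoint) (auto simp: A1_def A2_def)
  moreover have "sum g A1 \<le> B powr (p+1)"
  proof -
    have "sum g A1 \<le> sum (\<lambda>m. B powr p) A1"
    proof (intro sum_mono)
      fix m assume m: "m \<in> A1"
      have "g m \<le> real m powr p * 1" unfolding g_def by (intro mult_left_mono) auto
      also have "\<dots> \<le> B powr p" using m p by (auto simp: A1_def intro!: powr_mono2)
      finally show "g m \<le> B powr p" .
    qed
    also have "\<dots> = real (card A1) * B powr p" by simp
    also have "real (card A1) \<le> B"
    proof -
      have "A1 \<subseteq> {1..nat \<lfloor>B\<rfloor>}" by (auto simp: A1_def le_nat_floor)
      then have "card A1 \<le> nat \<lfloor>B\<rfloor>" using card_mono[of "{1..nat \<lfloor>B\<rfloor>}" A1] by simp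
      then have "real (card A1) \<le> real (nat \<lfloor>B\<rfloor>)" by linarith
      also have "\<dots> \<le> B" using B by linarith
      finally show ?thesis .
    qed
    then have "real (card A1) * B powr p \<le> B * B powr p" by (intro mult_right_mono) auto
    also have "\<dots> = B powr (p+1)" using B by (simp add: powr_add)
    finally show ?thesis .
  qed
  moreover have "sum g A2 \<le> s/(s-1) * B powr (p+1)"
  proof -
    define M where "M = Suc (nat \<lfloor>B\<rfloor>)"
    have M1: "1 \<le> M" by (simp add: M_def)
    have MB: "B < real M" unfolding M_def using B by linarith
    have sub: "A2 \<subseteq> {M..N}" unfolding A2_def M_def by (auto simp: nat_less_iff) linarith
    have "sum g A2 \<le> sum (\<lambda>m. B powr q * real m powr (-s)) A2"
    proof (intro sum_mono)
      fix m assume m: "m \<in> A2"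
      then have mpos: "0 < real m" using B by (auto simp: A2_def)
      have "g m \<le> real m powr p * (real m / B) powr (-q)" unfolding g_def by (intro mult_left_mono) auto
      also have "\<dots> = B powr q * real m powr (-s)"
        using mpos B by (simp add: powr_divide powr_minus s_def powr_diff field_simps)
      finally show "g m \<le> B powr q * real m powr (-s)" .
    qed
    also have "\<dots> \<le> sum (\<lambda>m. B powr q * real m powr (-s)) {M..N}"
      by (intro sum_mono2 sub) auto
    also have "\<dots> = B powr q * (\<Sum>m\<in>{M..N}. real m powr (-s))" by (simp add: sum_distrib_left)
    also have "\<dots> \<le> B powr q * (s/(s-1) * real M powr (1-s))"
      by (intro mult_left_mono tail_sum s1 M1) auto
    also have "\<dots> \<le> B powr q * (s/(s-1) * B powr (1-s))"
      using s1 B MB by (intro mult_left_mono powr_mono2') auto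
    also have "\<dots> = s/(s-1) * B powr (p+1)"
      using B by (simp add: s_def powr_add[symmetric] add.commute)
    finally show ?thesis .
  qed
  ultimately have "sum g {1..N} \<le> (1 + s/(s-1)) * B powr (p+1)" by (simp add: algebra_simps)
  then show ?thesis by (simp add: g_def s_def)
qed

lemma sum_shift1: "(\<Sum>j<n. h (Suc j)) = (\<Sum>m\<in>{1..n}. h m)"
  by (induction n) (auto simp: atLeastAtMostSuc_conv add.commute)

lemma sq_exp_bound:
  fixes x s :: real assumes "0 \<le> x" "0 < s"
  shows "x\<^sup>2 * exp (-2 * x * s) \<le> 1 / s\<^sup>2"
proof -
  have "x * s \<le> exp (x * s)" using exp_ge_add_one_self[of "x * s"] by linarith
  then have "(x * s)\<^sup>2 \<le> (exp (x * s))\<^sup>2" using assms by (intro power_mono) auto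
  also have "\<dots> = exp (2 * x * s)" by (simp add: power2_eq_square exp_add[symmetric])
  finally have h: "x\<^sup>2 * s\<^sup>2 \<le> exp (2 * x * s)" by (simp add: power_mult_distrib)
  have "x\<^sup>2 * exp (-2 * x * s) = x\<^sup>2 / exp (2 * x * s)" by (simp add: exp_minus field_simps)
  also have "\<dots> \<le> 1 / s\<^sup>2" using h assms by (simp add: field_simps)
  finally show ?thesis .
qed

locale lamset =
  fixes lam :: "nat \<Rightarrow> real" and c1 \<beta> :: real
  assumes nonneg: "\<forall>j\<ge>1. 0 \<le> lam j"
    and summ: "summable (\<lambda>j. lam (Suc j))"
    and decay: "\<forall>j\<ge>1. lam j \<le> c1 * real j powr (-\<beta>)"
    and c1: "0 < c1" and beta: "1 < \<beta>"
begin

definition ff :: "real \<Rightarrow> real" where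
  "ff s = (\<Sum>j. (lam (Suc j))\<^sup>2 * exp (-2 * lam (Suc j) * s))"

lemma lam_le_c1: "lam (Suc j) \<le> c1"
proof -
  have "lam (Suc j) \<le> c1 * real (Suc j) powr (-\<beta>)" using decay by auto
  also have "real (Suc j) powr (-\<beta>) \<le> 1" using beta
    by (subst powr_minus) (simp add: field_simps ge_one_powr_ge_zero)
  then have "c1 * real (Suc j) powr (-\<beta>) \<le> c1" using c1 mult_left_mono[of _ 1 c1] by simp
  finally show ?thesis .
qed

lemma term_le: assumes "0 \<le> s"
  shows "(lam (Suc j))\<^sup>2 * exp (-2 * lam (Suc j) * s) \<le> c1 * lam (Suc j)"
proof -
  have l0: "0 \<le> lam (Suc j)" using nonneg by auto
  have "exp (-2 * lam (Suc j) * s) \<le> 1" using l0 assms by (simp add: mult_nonneg_nonneg)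
  then have "(lam (Suc j))\<^sup>2 * exp (-2 * lam (Suc j) * s) \<le> (lam (Suc j))\<^sup>2 * 1"
    by (intro mult_left_mono) auto
  also have "\<dots> = lam (Suc j) * lam (Suc j)" by (simp add: power2_eq_square)
  also have "\<dots> \<le> c1 * lam (Suc j)" using lam_le_c1 l0 by (intro mult_right_mono) auto
  finally show ?thesis .
qed

lemma summable_terms: assumes "0 \<le> s"
  shows "summable (\<lambda>j. (lam (Suc j))\<^sup>2 * exp (-2 * lam (Suc j) * s))"
  by (rule summable_comparison_test[of _ "\<lambda>j. c1 * lam (Suc j)"])
     (use term_le[OF assms] summ in \<open>auto intro!: summable_mult\<close>)

lemma ff_le0: assumes "0 \<le> s" shows "ff s \<le> c1 * (\<Sum>j. lam (Suc j))"
proof -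
  have "ff s \<le> (\<Sum>j. c1 * lam (Suc j))" unfolding ff_def
    by (intro suminf_le term_le assms summable_terms summable_mult summ)
  also have "\<dots> = c1 * (\<Sum>j. lam (Suc j))" by (rule suminf_mult[OF summ])
  finally show ?thesis .
qed

lemma ff_le1: assumes s: "0 < s"
  shows "ff s \<le> (1 + 2*\<beta>/(2*\<beta>-1)) * c1 powr (1/\<beta>) * s powr (-(2 - 1/\<beta>))"
proof -
  define B where "B = (c1 * s) powr (1/\<beta>)"
  have B: "0 < B" using c1 s by (simp add: B_def)
  define CS where "CS = (1 + 2*\<beta>/(2*\<beta>-1))"
  have "ff s \<le> 1 / s\<^sup>2 * (CS * B)"
    unfolding ff_def
  proof (rule suminf_le_const[OF summable_terms])
    fix n
    define h where "h = (\<lambda>m::nat. real m powr 0 * min 1 ((real m / B) powr (-(2*\<beta>))))"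
    have "(\<Sum>j<n. (lam (Suc j))\<^sup>2 * exp (-2 * lam (Suc j) * s))
        \<le> (\<Sum>j<n. 1 / s\<^sup>2 * h (Suc j))"
    proof (intro sum_mono)
      fix j
      define x where "x = lam (Suc j)"
      define m where "m = real (Suc j)"
      have x0: "0 \<le> x" using nonneg by (auto simp: x_def)
      have m0: "0 < m" by (simp add: m_def)
      have xm: "x \<le> c1 * m powr (-\<beta>)" using decay by (auto simp: x_def m_def)
      have e1: "x\<^sup>2 * exp (-2 * x * s) \<le> 1 / s\<^sup>2 * 1" using sq_exp_bound[OF x0 s] by simp
      have "x\<^sup>2 * exp (-2 * x * s) \<le> x\<^sup>2 * 1"
        using x0 s by (intro mult_left_mono) (auto simp: mult_nonneg_nonneg)
      also have "\<dots> \<le> (c1 * m powr (-\<beta>))\<^sup>2" using x0 xm by (simp add: power_mono)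
      also have "\<dots> = 1 / s\<^sup>2 * (m / B) powr (-(2*\<beta>))"
      proof -
        have "(m / B) powr (-(2*\<beta>)) = m powr (-(2*\<beta>)) * B powr (2*\<beta>)"
          using m0 B by (simp add: powr_divide powr_minus field_simps)
        also have "B powr (2*\<beta>) = (c1 * s)\<^sup>2"
          using c1 s beta by (simp add: B_def powr_powr powr_power[symmetric])
        finally have "(m / B) powr (-(2*\<beta>)) = m powr (-(2*\<beta>)) * (c1 * s)\<^sup>2" .
        moreover have "(m powr (-\<beta>))\<^sup>2 = m powr (-(2*\<beta>))"
          using m0 by (simp add: power2_eq_square powr_add[symmetric])
        ultimately show ?thesis using s by (simp add: power_mult_distrib field_simps)
      qed
      finally have e2: "x\<^sup>2 * exp (-2 * x * s) \<le> 1 / s\<^sup>2 * (m / B) powr (-(2*\<beta>))" .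
      have "x\<^sup>2 * exp (-2 * x * s) \<le> 1 / s\<^sup>2 * min 1 ((m / B) powr (-(2*\<beta>)))"
        using e1 e2 by (simp add: min_def)
      then show "(lam (Suc j))\<^sup>2 * exp (-2 * lam (Suc j) * s)
          \<le> 1 / s\<^sup>2 * h (Suc j)"
        by (simp add: x_def m_def h_def)
    qed
    also have "\<dots> = 1 / s\<^sup>2 * (\<Sum>j<n. h (Suc j))" by (simp only: sum_distrib_left)
    also have "\<dots> = 1 / s\<^sup>2 * (\<Sum>m\<in>{1..n}. h m)" by (simp only: sum_shift1)
    also have "\<dots> = 1 / s\<^sup>2 * (\<Sum>m\<in>{1..n}. real m powr 0 * min 1 ((real m / B) powr (-(2*\<beta>))))"
      by (simp add: h_def)
    also have "\<dots> \<le> 1 / s\<^sup>2 * (CS * B powr (0+1))"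
      unfolding CS_def using lemS[OF B, of 0 "2*\<beta>" n] beta by (intro mult_left_mono) auto
    finally show "(\<Sum>j<n. (lam (Suc j))\<^sup>2 * exp (-2 * lam (Suc j) * s)) \<le> 1 / s\<^sup>2 * (CS * B)" using B by simp
  qed (use s in auto)
  also have "1 / s\<^sup>2 * (CS * B) = CS * c1 powr (1/\<beta>) * s powr (-(2 - 1/\<beta>))"
    using s c1 by (simp add: B_def powr_mult powr_diff powr_minus field_simps powr_power[symmetric])
  finally show ?thesis by (simp add: CS_def)
qed

end


lemma rev_sum: "(\<Sum>i<N. (\<phi>::nat \<Rightarrow> real) (N - i)) = (\<Sum>m\<in>{1..N}. \<phi> m)"
  by (rule sum.reindex_bij_witness[of _ "\<lambda>m. N - m" "\<lambda>i. N - i"]) auto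

lemma rev_sum2: "(\<Sum>k\<in>{Suc i..<N}. (\<phi>::nat \<Rightarrow> real) (N - k)) = (\<Sum>l\<in>{1..N - Suc i}. \<phi> l)"
  by (rule sum.reindex_bij_witness[of _ "\<lambda>l. N - l" "\<lambda>k. N - k"]) auto

theorem mainTheorem16:
  fixes lam :: "nat \<Rightarrow> real" and c \<beta> \<gamma> eta_bar :: real
  assumes "\<forall>j\<ge>1. 0 \<le> lam j"
    and "summable (\<lambda>j. lam (Suc j))"
    and "\<forall>j\<ge>1. lam j \<le> c * real j powr (-\<beta>)"
    and "\<beta> > 1" and "\<gamma> > 0" and "\<beta> \<noteq> \<gamma> + 1"
  shows "\<exists>C. \<forall>(N::nat) eta0. 0 < eta0 \<longrightarrow> eta0 \<le> eta_bar \<longrightarrow>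
           1 \<le> sched_time eta0 \<gamma> N N \<longrightarrow>
           noise_term lam eta0 \<gamma> N
             \<le> C * eta0 * sched_time eta0 \<gamma> N N powr (- min (1 - 1/\<beta>) (\<gamma> / (\<gamma> + 1)))"
proof -
  have beta: "1 < \<beta>" and gam: "0 < \<gamma>" using assms by auto
  define c1 where "c1 = \<bar>c\<bar> + 1"
  have dec1: "\<forall>j\<ge>1. lam j \<le> c1 * real j powr (-\<beta>)"
  proof (intro allI impI)
    fix j :: nat assume "1 \<le> j"
    then have "lam j \<le> c * real j powr (-\<beta>)" using assms(3) by auto
    also have "\<dots> \<le> c1 * real j powr (-\<beta>)" by (intro mult_right_mono) (auto simp: c1_def)
    finally show "lam j \<le> c1 * real j powr (-\<beta>)" .
  qed
  interpret L: lamset lam c1 \<beta> using assms dec1 by unfold_locales (auto simp: c1_def)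
  define a where "a = 2 - 1/\<beta>"
  have a1: "1 < a" using beta by (simp add: a_def field_simps)
  define q where "q = (\<gamma>+1) * a"
  define rs where "rs = min (1 - 1/\<beta>) (\<gamma>/(\<gamma>+1))"
  define K0 where "K0 = c1 * (\<Sum>j. lam (Suc j))"
  define K1 where "K1 = (1 + 2*\<beta>/(2*\<beta>-1)) * c1 powr (1/\<beta>)"
  define Km where "Km = K0 + K1"
  have K0: "0 \<le> K0" unfolding K0_def using L.c1 assms(1,2)
    by (intro mult_nonneg_nonneg suminf_nonneg) auto
  have K1: "0 \<le> K1" unfolding K1_def using beta by (intro mult_nonneg_nonneg) (auto simp: field_simps)
  have f0: "L.ff s \<le> Km" if "0 \<le> s" for s
    using L.ff_le0[OF that] K1 by (simp add: Km_def K0_def)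
  have f1: "L.ff s \<le> Km * s powr (-a)" if "0 < s" for s
  proof -
    have "L.ff s \<le> K1 * s powr (-a)" using L.ff_le1[OF that] by (simp add: K1_def a_def)
    also have "\<dots> \<le> Km * s powr (-a)" using K0 by (intro mult_right_mono) (auto simp: Km_def)
    finally show ?thesis .
  qed
  define D1 where "D1 = (2 powr (\<gamma>+1) * (\<gamma>+1)) powr (1/(\<gamma>+1))"
  have D1: "0 < D1" unfolding D1_def using gam by simp
  have D1p: "D1 powr (\<gamma>+1) = 2 powr (\<gamma>+1) * (\<gamma>+1)"
    unfolding D1_def using gam by (simp add: powr_powr)
  define CS where "CS = 1 + (q - 2*\<gamma>)/(q - 2*\<gamma> - 1)"
  define CP where "CP = max 1 (1/(2*\<gamma> - q + 1))"
  define C where "C = Km * (eta_bar * eta_bar powr (2*\<gamma>) + \<bar>CS\<bar> * D1 powr (2*\<gamma>+1) + CP * D1 powr q)"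
  show ?thesis
  proof (rule exI[of _ C], intro allI impI)
    fix N :: nat and eta0 :: real
    assume e0: "0 < eta0" and e1: "eta0 \<le> eta_bar" and T1: "1 \<le> sched_time eta0 \<gamma> N N"
    define T where "T = sched_time eta0 \<gamma> N N"
    define X where "X = eta0 * real N"
    have N1: "1 \<le> N"
    proof (rule ccontr)
      assume "\<not> 1 \<le> N" then have "N = 0" by simp
      then show False using T1 by (simp add: sched_time_def)
    qed
    have Npos: "0 < real N" using N1 by simp
    have step: "step_size eta0 \<gamma> N i = eta0 * (real (N-i) / real N) powr \<gamma>" if "i < N" for i
    proof -
      have "1 - real i / real N = real (N-i) / real N" using that Npos by (simp add: of_nat_diff field_simps)
      then show ?thesis by (simp add: step_size_def)
    qed
    have TX: "T \<le> X"
    proof -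
      have "T \<le> (\<Sum>i<N. eta0)" unfolding T_def sched_time_def
      proof (intro sum_mono)
        fix i assume "i \<in> {..<N}"
        then have iN: "i < N" by simp
        have "(real (N-i) / real N) powr \<gamma> \<le> 1 powr \<gamma>"
          using iN gam Npos by (intro powr_mono2) (auto simp: field_simps)
        then show "step_size eta0 \<gamma> N i \<le> eta0" using step[OF iN] e0
          using mult_left_mono[of "(real (N-i) / real N) powr \<gamma>" 1 eta0] by simp
      qed
      then show ?thesis by (simp add: X_def mult.commute)
    qed
    have Tpos: "0 < T" using T1 by (simp add: T_def)
    have Xpos: "0 < X" using e0 Npos by (simp add: X_def)
    define B where "B = D1 * real N * X powr (-1/(\<gamma>+1))"
    have Bpos: "0 < B" using D1 Npos Xpos by (simp add: B_def)
    have Bpow: "B powr t = D1 powr t * real N powr t * X powr (-t/(\<gamma>+1))" for t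
      unfolding B_def using D1 Npos Xpos by (simp add: powr_mult powr_powr)
    define S where "S = (\<lambda>i. T - sched_time eta0 \<gamma> N (Suc i))"
    have Seq: "S i = eta0 / real N powr \<gamma> * (\<Sum>l\<in>{1..N - Suc i}. real l powr \<gamma>)" if "i < N" for i
    proof -
      have "S i = (\<Sum>k\<in>{Suc i..<N}. step_size eta0 \<gamma> N k)"
        unfolding S_def T_def sched_time_def lessThan_atLeast0
        using sum_diff_nat_ivl[of 0 "Suc i" N] that by simp
      also have "\<dots> = (\<Sum>k\<in>{Suc i..<N}. eta0 / real N powr \<gamma> * real (N - k) powr \<gamma>)"
        by (intro sum.cong refl) (auto simp: step powr_divide)
      also have "\<dots> = eta0 / real N powr \<gamma> * (\<Sum>k\<in>{Suc i..<N}. real (N - k) powr \<gamma>)"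
        by (simp add: sum_distrib_left)
      also have "\<dots> = eta0 / real N powr \<gamma> * (\<Sum>l\<in>{1..N - Suc i}. real l powr \<gamma>)"
        using rev_sum2[where \<phi> = "\<lambda>l. real l powr \<gamma>" and i = i and N = N] by simp
      finally show ?thesis .
    qed
    have S0: "0 \<le> S i" if "i < N" for i
    proof -
      have "0 \<le> eta0 / real N powr \<gamma> * (\<Sum>l\<in>{1..N - Suc i}. real l powr \<gamma>)"
        using e0 by (intro mult_nonneg_nonneg sum_nonneg) auto
      then show ?thesis using Seq[OF that] by simp
    qed
    have Slow: "(real (N - i) / B) powr (\<gamma>+1) \<le> S i" if "i < N" "2 \<le> N - i" for i
    proof -
      define m where "m = N - i"
      have "real m / 2 \<le> real (N - Suc i)" using that by (simp add: m_def of_nat_diff)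
      then have "(real m / 2) powr (\<gamma>+1) / (\<gamma>+1) \<le> real (N - Suc i) powr (\<gamma>+1) / (\<gamma>+1)"
        using gam by (intro divide_right_mono powr_mono2) auto
      also have "\<dots> \<le> (\<Sum>l\<in>{1..N - Suc i}. real l powr \<gamma>)"
        using sum_pow_lower[of \<gamma> "N - Suc i"] gam by simp
      finally have h: "(real m / 2) powr (\<gamma>+1) / (\<gamma>+1) \<le> (\<Sum>l\<in>{1..N - Suc i}. real l powr \<gamma>)" .
      have "(real m / B) powr (\<gamma>+1) = eta0 / real N powr \<gamma> * ((real m / 2) powr (\<gamma>+1) / (\<gamma>+1))"
      proof -
        have "B powr (\<gamma>+1) = 2 powr (\<gamma>+1) * (\<gamma>+1) * real N powr (\<gamma>+1) / X"
        proof -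
          have "-(\<gamma>+1)/(\<gamma>+1) = -1" using gam by (simp add: field_simps)
          then have "X powr (-(\<gamma>+1)/(\<gamma>+1)) = 1 / X" using Xpos by (simp add: powr_minus divide_inverse)
          then show ?thesis using Bpow[of "\<gamma>+1"] D1p by simp
        qed
        also have "\<dots> = 2 powr (\<gamma>+1) * (\<gamma>+1) * real N powr \<gamma> / eta0"
          using Npos e0 by (simp add: X_def powr_add)
        finally have "B powr (\<gamma>+1) = 2 powr (\<gamma>+1) * (\<gamma>+1) * real N powr \<gamma> / eta0" .
        then have "(real m / B) powr (\<gamma>+1) = real m powr (\<gamma>+1) * eta0 / (2 powr (\<gamma>+1) * (\<gamma>+1) * real N powr \<gamma>)"
          using Bpos e0 by (simp add: powr_divide)
        also have "\<dots> = eta0 / real N powr \<gamma> * ((real m powr (\<gamma>+1) / 2 powr (\<gamma>+1)) / (\<gamma>+1))"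
          by (simp add: field_simps)
        finally show ?thesis by (simp add: powr_divide)
      qed
      also have "\<dots> \<le> eta0 / real N powr \<gamma> * (\<Sum>l\<in>{1..N - Suc i}. real l powr \<gamma>)"
        using h e0 by (intro mult_left_mono) auto
      also have "\<dots> = S i" using Seq[OF that(1)] by simp
      finally show ?thesis by (simp add: m_def)
    qed
    define \<phi> where "\<phi> = (\<lambda>m. eta0\<^sup>2 * Km * ((if m = 1 then (1 / real N) powr (2*\<gamma>) else 0)
                     + (real m / real N) powr (2*\<gamma>) * min 1 ((real m / B) powr (-q))))"
    have termb: "(step_size eta0 \<gamma> N i)\<^sup>2 * L.ff (S i) \<le> \<phi> (N - i)" if iN: "i < N" for i
    proof -
      define m where "m = N - i"
      have m1: "1 \<le> m" using iN by (simp add: m_def)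
      have sq: "(step_size eta0 \<gamma> N i)\<^sup>2 = eta0\<^sup>2 * (real m / real N) powr (2*\<gamma>)"
        using step[OF iN] by (simp add: m_def power_mult_distrib power2_eq_square powr_add[symmetric])
      have Km0: "0 \<le> Km" using K0 K1 by (simp add: Km_def)
      have nn: "0 \<le> (real m / real N) powr (2*\<gamma>) * min 1 ((real m / B) powr (-q))" by simp
      show ?thesis
      proof (cases "m = 1")
        case True
        have "L.ff (S i) \<le> Km" using f0 S0[OF iN] by simp
        then have "(step_size eta0 \<gamma> N i)\<^sup>2 * L.ff (S i) \<le> eta0\<^sup>2 * (1 / real N) powr (2*\<gamma>) * Km"
          using sq True by (simp add: mult_left_mono)
        also have "\<dots> = eta0\<^sup>2 * Km * ((1 / real N) powr (2*\<gamma>) + 0)" by simp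
        also have "\<dots> \<le> eta0\<^sup>2 * Km * ((1 / real N) powr (2*\<gamma>)
             + (real m / real N) powr (2*\<gamma>) * min 1 ((real m / B) powr (-q)))"
          by (intro mult_left_mono add_left_mono nn) (use Km0 in auto)
        also have "\<dots> = \<phi> (N - i)" unfolding \<phi>_def using True by (simp add: m_def[symmetric])
        finally show ?thesis .
      next
        case False
        then have m2: "2 \<le> m" using m1 by simp
        have Sl: "(real m / B) powr (\<gamma>+1) \<le> S i" using Slow[OF iN] m2 by (simp add: m_def)
        have Sp: "0 < (real m / B) powr (\<gamma>+1)" using m1 Bpos by simp
        have "L.ff (S i) \<le> Km * S i powr (-a)" using f1 Sl Sp by (meson order_less_le_trans)
        also have "\<dots> \<le> Km * ((real m / B) powr (\<gamma>+1)) powr (-a)"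
          using Km0 a1 Sl Sp by (intro mult_left_mono powr_mono2') auto
        also have "\<dots> = Km * (real m / B) powr (-q)" by (simp add: powr_powr q_def)
        finally have "L.ff (S i) \<le> Km * (real m / B) powr (-q)" .
        moreover have "L.ff (S i) \<le> Km * 1" using f0 S0[OF iN] by simp
        ultimately have "L.ff (S i) \<le> Km * min 1 ((real m / B) powr (-q))" by (simp add: min_def)
        then have "(step_size eta0 \<gamma> N i)\<^sup>2 * L.ff (S i)
            \<le> eta0\<^sup>2 * (real m / real N) powr (2*\<gamma>) * (Km * min 1 ((real m / B) powr (-q)))"
          using sq by (simp add: mult_left_mono)
        also have "\<dots> = \<phi> (N - i)" unfolding \<phi>_def using False by (simp add: m_def[symmetric])
        finally show ?thesis .
      qed
    qed
    define H where "H = (\<Sum>m\<in>{1..N}. real m powr (2*\<gamma>) * min 1 ((real m / B) powr (-q)))"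
    have noise_eq: "noise_term lam eta0 \<gamma> N = (\<Sum>i<N. (step_size eta0 \<gamma> N i)\<^sup>2 * L.ff (S i))"
      by (simp add: noise_term_def L.ff_def S_def T_def)
    have "noise_term lam eta0 \<gamma> N \<le> (\<Sum>i<N. \<phi> (N - i))"
      unfolding noise_eq by (intro sum_mono termb) auto
    also have "\<dots> = (\<Sum>m\<in>{1..N}. \<phi> m)" by (rule rev_sum)
    also have "\<dots> = eta0\<^sup>2 * Km * ((1 / real N) powr (2*\<gamma>) + real N powr (-2*\<gamma>) * H)"
    proof -
      have "(\<Sum>m\<in>{1..N}. \<phi> m) = eta0\<^sup>2 * Km * ((\<Sum>m\<in>{1..N}. (if m = 1 then (1 / real N) powr (2*\<gamma>) else 0))
           + (\<Sum>m\<in>{1..N}. (real m / real N) powr (2*\<gamma>) * min 1 ((real m / B) powr (-q))))"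
        unfolding \<phi>_def by (simp only: sum_distrib_left[symmetric] sum.distrib)
      also have "(\<Sum>m\<in>{1..N}. (if m = 1 then (1 / real N) powr (2*\<gamma>) else 0)) = (1 / real N) powr (2*\<gamma>)"
        using N1 by (simp add: sum.delta)
      also have "(\<Sum>m\<in>{1..N}. (real m / real N) powr (2*\<gamma>) * min 1 ((real m / B) powr (-q)))
          = real N powr (-2*\<gamma>) * H"
        unfolding H_def sum_distrib_left
        by (intro sum.cong refl) (simp add: powr_divide powr_minus field_simps)
      finally show ?thesis .
    qed
    also have "\<dots> \<le> C * eta0 * T powr (-rs)"
    proof -
      have rs_le: "rs \<le> 2*\<gamma>"
      proof -
        have "\<gamma>/(\<gamma>+1) \<le> 2*\<gamma>" using gam by (simp add: field_simps)
        then show ?thesis by (simp add: rs_def)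
      qed
      have etab: "0 < eta_bar" using e0 e1 by simp
      have first: "eta0\<^sup>2 * (1 / real N) powr (2*\<gamma>) \<le> eta_bar * eta_bar powr (2*\<gamma>) * eta0 * T powr (-rs)"
      proof -
        have "1 / real N \<le> eta_bar / T"
        proof -
          have "T \<le> eta_bar * real N" using TX e1 Npos by (simp add: X_def mult_right_mono order_trans)
          then show ?thesis using Tpos Npos by (simp add: field_simps)
        qed
        then have "(1 / real N) powr (2*\<gamma>) \<le> (eta_bar / T) powr (2*\<gamma>)"
          using gam Npos by (intro powr_mono2) auto
        also have "\<dots> = eta_bar powr (2*\<gamma>) * T powr (-(2*\<gamma>))"
          using etab Tpos by (simp add: divide_inverse powr_mult powr_minus inverse_powr)
        also have "\<dots> \<le> eta_bar powr (2*\<gamma>) * T powr (-rs)"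
          using T1 rs_le by (intro mult_left_mono powr_mono) (auto simp: T_def)
        finally have h1: "(1 / real N) powr (2*\<gamma>) \<le> eta_bar powr (2*\<gamma>) * T powr (-rs)" .
        have "eta0\<^sup>2 * (1 / real N) powr (2*\<gamma>) \<le> eta0\<^sup>2 * (eta_bar powr (2*\<gamma>) * T powr (-rs))"
          using h1 by (intro mult_left_mono) auto
        also have "\<dots> \<le> (eta_bar * eta0) * (eta_bar powr (2*\<gamma>) * T powr (-rs))"
          using e0 e1 by (intro mult_right_mono) (auto simp: power2_eq_square)
        finally show ?thesis by (simp add: algebra_simps)
      qed
      have second: "eta0\<^sup>2 * (real N powr (-2*\<gamma>) * H) \<le> (\<bar>CS\<bar> * D1 powr (2*\<gamma>+1) + CP * D1 powr q) * eta0 * T powr (-rs)"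
      proof -
        have CP0: "0 \<le> CP * D1 powr q" by (simp add: CP_def)
        have CS0: "0 \<le> \<bar>CS\<bar> * D1 powr (2*\<gamma>+1)" by simp
        have rs0: "0 \<le> rs" using beta gam by (simp add: rs_def)
        have XT: "X powr (-rs) \<le> T powr (-rs)" using rs0 Tpos TX by (intro powr_mono2') auto
        have Nm: "real N powr (-2*\<gamma>) * real N powr t * real N powr (2*\<gamma> - t + 1) = real N" for t
        proof -
          have "real N powr (-2*\<gamma>) * real N powr t * real N powr (2*\<gamma> - t + 1)
              = real N powr (-2*\<gamma> + t + (2*\<gamma> - t + 1))" by (simp only: powr_add[symmetric])
          also have "\<dots> = real N" using Npos by simp
          finally show ?thesis .
        qed
        show ?thesis
        proof (cases "\<gamma> + 1 < \<beta>")
          case True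
          have qb: "2*\<gamma> + 1 < q"
          proof -
            have "(\<gamma>+1)/\<beta> < 1" using True beta by (simp add: field_simps)
            moreover have "q = 2*\<gamma> + 2 - (\<gamma>+1)/\<beta>" using beta by (simp add: q_def a_def field_simps)
            ultimately show ?thesis by simp
          qed
          have rsv: "rs = \<gamma>/(\<gamma>+1)"
          proof -
            have "1/\<beta> \<le> 1/(\<gamma>+1)" using True gam by (simp add: field_simps)
            then have "\<gamma>/(\<gamma>+1) \<le> 1 - 1/\<beta>" using gam by (simp add: field_simps)
            then show ?thesis by (simp add: rs_def)
          qed
          have H: "H \<le> CS * B powr (2*\<gamma>+1)"
            unfolding H_def CS_def using lemS[OF Bpos, of "2*\<gamma>" q N] gam qb by simp
          have eqB: "eta0\<^sup>2 * (real N powr (-2*\<gamma>) * B powr (2*\<gamma>+1)) = D1 powr (2*\<gamma>+1) * eta0 * X powr (-rs)"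
          proof -
            have ex: "-(2*\<gamma>+1)/(\<gamma>+1) = -rs - 1" using gam by (simp add: rsv field_simps)
            have "X powr (-(2*\<gamma>+1)/(\<gamma>+1)) = X powr (-rs) / X"
              using Xpos by (subst ex) (simp add: powr_diff)
            moreover have NN: "real N powr (-2*\<gamma>) * real N powr (2*\<gamma>+1) = real N"
              using Nm[of 0] Npos by simp
            ultimately have "eta0\<^sup>2 * (real N powr (-2*\<gamma>) * B powr (2*\<gamma>+1))
                = eta0\<^sup>2 * D1 powr (2*\<gamma>+1) * (real N powr (-2*\<gamma>) * real N powr (2*\<gamma>+1)) * (X powr (-rs) / X)"
              by (simp add: Bpow algebra_simps)
            also have "\<dots> = eta0\<^sup>2 * D1 powr (2*\<gamma>+1) * real N * (X powr (-rs) / X)"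
              by (simp only: NN)
            also have "\<dots> = D1 powr (2*\<gamma>+1) * eta0 * X powr (-rs)"
              using Npos Xpos e0 by (simp add: X_def power2_eq_square field_simps)
            finally show ?thesis .
          qed
          have "eta0\<^sup>2 * (real N powr (-2*\<gamma>) * H) \<le> eta0\<^sup>2 * (real N powr (-2*\<gamma>) * (CS * B powr (2*\<gamma>+1)))"
            using H by (intro mult_left_mono) auto
          also have "\<dots> = CS * (eta0\<^sup>2 * (real N powr (-2*\<gamma>) * B powr (2*\<gamma>+1)))" by (simp add: algebra_simps)
          also have "\<dots> = CS * (D1 powr (2*\<gamma>+1) * eta0 * X powr (-rs))" by (simp only: eqB)
          also have "\<dots> \<le> \<bar>CS\<bar> * D1 powr (2*\<gamma>+1) * eta0 * T powr (-rs)"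
          proof -
            have "CS * (D1 powr (2*\<gamma>+1) * eta0 * X powr (-rs)) \<le> \<bar>CS\<bar> * (D1 powr (2*\<gamma>+1) * eta0 * X powr (-rs))"
              using e0 by (intro mult_right_mono) auto
            also have "\<dots> \<le> \<bar>CS\<bar> * (D1 powr (2*\<gamma>+1) * eta0 * T powr (-rs))"
              using e0 XT by (intro mult_left_mono) auto
            finally show ?thesis by (simp add: algebra_simps)
          qed
          also have "\<dots> \<le> (\<bar>CS\<bar> * D1 powr (2*\<gamma>+1) + CP * D1 powr q) * eta0 * T powr (-rs)"
            using CP0 e0 by (intro mult_right_mono) auto
          finally show ?thesis .
        next
          case False
          then have lo: "\<beta> < \<gamma> + 1" using assms(6) by simp
          have qb: "-1 < 2*\<gamma> - q"
          proof -
            have "1 < (\<gamma>+1)/\<beta>" using lo beta by (simp add: field_simps)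
            moreover have "q = 2*\<gamma> + 2 - (\<gamma>+1)/\<beta>" using beta by (simp add: q_def a_def field_simps)
            ultimately show ?thesis by simp
          qed
          have rsv: "rs = a - 1"
          proof -
            have "1/(\<gamma>+1) \<le> 1/\<beta>" using lo beta by (simp add: field_simps)
            then have "1 - 1/\<beta> \<le> \<gamma>/(\<gamma>+1)" using gam by (simp add: field_simps)
            then show ?thesis by (simp add: rs_def a_def)
          qed
          have H: "H \<le> B powr q * (CP * real N powr (2*\<gamma> - q + 1))"
          proof -
            have "H \<le> (\<Sum>m\<in>{1..N}. B powr q * real m powr (2*\<gamma> - q))"
              unfolding H_def
            proof (intro sum_mono)
              fix m assume "m \<in> {1..N}"
              then have mpos: "0 < real m" by simp
              have "real m powr (2*\<gamma>) * min 1 ((real m / B) powr (-q)) \<le> real m powr (2*\<gamma>) * (real m / B) powr (-q)"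
                by (intro mult_left_mono) auto
              also have "\<dots> = B powr q * real m powr (2*\<gamma> - q)"
                using mpos Bpos by (simp add: powr_divide powr_minus powr_diff field_simps)
              finally show "real m powr (2*\<gamma>) * min 1 ((real m / B) powr (-q)) \<le> B powr q * real m powr (2*\<gamma> - q)" .
            qed
            also have "\<dots> = B powr q * (\<Sum>m\<in>{1..N}. real m powr (2*\<gamma> - q))" by (simp add: sum_distrib_left)
            also have "\<dots> \<le> B powr q * (CP * real N powr (2*\<gamma> - q + 1))"
              using sum_pow_upper[OF qb, of N] by (intro mult_left_mono) (auto simp: CP_def)
            finally show ?thesis .
          qed
          have eq: "eta0\<^sup>2 * (real N powr (-2*\<gamma>) * (B powr q * real N powr (2*\<gamma> - q + 1))) = D1 powr q * eta0 * X powr (-rs)"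
          proof -
            have ex: "-q/(\<gamma>+1) = -rs - 1" using gam by (simp add: rsv q_def field_simps)
            have "X powr (-q/(\<gamma>+1)) = X powr (-rs) / X"
              using Xpos by (subst ex) (simp add: powr_diff)
            then have "eta0\<^sup>2 * (real N powr (-2*\<gamma>) * (B powr q * real N powr (2*\<gamma> - q + 1)))
                = eta0\<^sup>2 * D1 powr q * (real N powr (-2*\<gamma>) * real N powr q * real N powr (2*\<gamma> - q + 1)) * (X powr (-rs) / X)"
              by (simp add: Bpow algebra_simps)
            also have "\<dots> = eta0\<^sup>2 * D1 powr q * real N * (X powr (-rs) / X)"
              by (simp only: Nm)
            also have "\<dots> = D1 powr q * eta0 * X powr (-rs)"
              using Npos Xpos e0 by (simp add: X_def power2_eq_square field_simps)
            finally show ?thesis .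
          qed
          have "eta0\<^sup>2 * (real N powr (-2*\<gamma>) * H) \<le> eta0\<^sup>2 * (real N powr (-2*\<gamma>) * (B powr q * (CP * real N powr (2*\<gamma> - q + 1))))"
            using H by (intro mult_left_mono) auto
          also have "\<dots> = CP * (eta0\<^sup>2 * (real N powr (-2*\<gamma>) * (B powr q * real N powr (2*\<gamma> - q + 1))))"
            by (simp add: algebra_simps)
          also have "\<dots> = CP * (D1 powr q * eta0 * X powr (-rs))" by (simp only: eq)
          also have "\<dots> \<le> CP * (D1 powr q * eta0 * T powr (-rs))"
            using e0 XT by (intro mult_left_mono) (auto simp: CP_def)
          also have "\<dots> \<le> (\<bar>CS\<bar> * D1 powr (2*\<gamma>+1) + CP * D1 powr q) * eta0 * T powr (-rs)"
            using CS0 e0 by (simp add: algebra_simps mult_right_mono)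
          finally show ?thesis .
        qed
      qed
      have Km0: "0 \<le> Km" using K0 K1 by (simp add: Km_def)
      have "eta0\<^sup>2 * Km * ((1 / real N) powr (2*\<gamma>) + real N powr (-2*\<gamma>) * H)
          = Km * (eta0\<^sup>2 * (1 / real N) powr (2*\<gamma>) + eta0\<^sup>2 * (real N powr (-2*\<gamma>) * H))"
        by (simp add: algebra_simps)
      also have "\<dots> \<le> Km * (eta_bar * eta_bar powr (2*\<gamma>) * eta0 * T powr (-rs)
           + (\<bar>CS\<bar> * D1 powr (2*\<gamma>+1) + CP * D1 powr q) * eta0 * T powr (-rs))"
        using first second Km0 by (intro mult_left_mono add_mono) auto
      also have "\<dots> = C * eta0 * T powr (-rs)" by (simp add: C_def algebra_simps)
      finally show ?thesis .
    qed
    finally show "noise_term lam eta0 \<gamma> N \<le> C * eta0 * sched_time eta0 \<gamma> N N powr (- min (1 - 1/\<beta>) (\<gamma> / (\<gamma> + 1)))"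
      by (simp add: T_def rs_def)
  qed
qed

end
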